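(* Consider a Kepler billiard in the plane $\mathbb{R}^2$: a particle moves under a Kepler(-Coulomb) potential centered at a point $F$, and is elastically reflected at a wall $\mathbf{K}$ which is a branch of a non-degenerate conic section having $F$ as a focus. Assume the total energy is non-zero, so that every Keplerian arc is an arc of a conic with one focus at $F$ and a well-defined semi-major axis $a$ (preserved under reflections), and each arc is determined up to orientation by its second focus. Let $F_1,F_2,\dots$ be the sequence of second foci of the successive Keplerian arcs along a billiard trajectory. Then: (i) if $\mathbf{K}$ is an ellipse or a branch of a hyperbola with foci $F$ and $F'$, all the points $F_i$ lie on one circle centered at $F'$; (ii) if $\mathbf{K}$ is a parabola with focus $F$, all the points $F_i$ lie on one line perpendicular to the axis of symmetry of the parabola.
   Context: Elastic reflection means the velocity is reflected with respect to the tangent line of $\mathbf{K}$ at the point of impact, preserving the energy. For an elliptic Keplerian orbit with semi-major axis $a$, the second focus $F_i$ is the point such that the orbit is the ellipse $\{P: |PF|+|PF_i|=2a\}$; for hyperbolic orbits it is the other focus of the hyperbola containing the arc. *)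

theory Defs
  imports "HOL-Analysis.Analysis"
begin

type_synonym pt = "real^2"

text \<open>Walls: non-degenerate conic (branches) having the Kepler centre F as a focus.
  Ellipse F' d     : the ellipse {P. dist P F + dist P F' = d}, with d > dist F F'
                     (F' = F allowed: a circle centred at F).
  HypBranch F' d   : the hyperbola branch {P. dist P F - dist P F' = d}, with d \<noteq> 0 and
                     abs d < dist F F' (the sign of d selects the branch).
  Parabola nv h    : the parabola with focus F and directrix {P. P \<bullet> nv = h},
                     nv a unit vector (direction of the axis of symmetry), F not on the directrix.\<close>
datatype wall = Ellipse pt real | HypBranch pt real | Parabola pt real

definition wall_valid :: "pt \<Rightarrow> wall \<Rightarrow> bool" where
  "wall_valid F w = (case w of
      Ellipse F' d \<Rightarrow> dist F F' < d
    | HypBranch F' d \<Rightarrow> d \<noteq> 0 \<and> \<bar>d\<bar> < dist F F'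
    | Parabola nv h \<Rightarrow> norm nv = 1 \<and> F \<bullet> nv \<noteq> h)"

definition wall_set :: "pt \<Rightarrow> wall \<Rightarrow> pt set" where
  "wall_set F w = (case w of
      Ellipse F' d \<Rightarrow> {P. dist P F + dist P F' = d}
    | HypBranch F' d \<Rightarrow> {P. dist P F - dist P F' = d}
    | Parabola nv h \<Rightarrow> {P. dist P F = \<bar>P \<bullet> nv - h\<bar>})"

text \<open>A normal vector of the wall at a point P of it: the gradient of the defining function
  (P \<mapsto> dist P F + dist P F', dist P F - dist P F', dist P F - abs (P \<bullet> nv - h)).\<close>
definition wall_normal :: "pt \<Rightarrow> wall \<Rightarrow> pt \<Rightarrow> pt" where
  "wall_normal F w P = (case w of
      Ellipse F' d \<Rightarrow> sgn (P - F) + sgn (P - F')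
    | HypBranch F' d \<Rightarrow> sgn (P - F) - sgn (P - F')
    | Parabola nv h \<Rightarrow> sgn (P - F) - sgn (P \<bullet> nv - h) *\<^sub>R nv)"

definition reflect_tangent :: "pt \<Rightarrow> pt \<Rightarrow> pt" where
  "reflect_tangent nu v = v - (2 * (v \<bullet> nu) / (nu \<bullet> nu)) *\<^sub>R nu"

definition kepler_acc :: "real \<Rightarrow> pt \<Rightarrow> pt \<Rightarrow> pt" where
  "kepler_acc mu F x = - (mu / norm (x - F) ^ 3) *\<^sub>R (x - F)"

definition kepler_energy :: "real \<Rightarrow> pt \<Rightarrow> pt \<Rightarrow> pt \<Rightarrow> real" where
  "kepler_energy mu F x v = norm v ^ 2 / 2 - mu / norm (x - F)"

definition ang_mom :: "pt \<Rightarrow> pt \<Rightarrow> pt \<Rightarrow> real" where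
  "ang_mom F x v = (x - F) $ 1 * v $ 2 - (x - F) $ 2 * v $ 1"

definition second_focus :: "pt \<Rightarrow> real \<Rightarrow> pt set \<Rightarrow> pt \<Rightarrow> bool" where
  "second_focus F E S G =
     ((E < 0 \<and> (\<exists>a>0. \<forall>P\<in>S. dist P F + dist P G = 2 * a)) \<or>
      (E > 0 \<and> (\<exists>a>0. \<forall>P\<in>S. \<bar>dist P F - dist P G\<bar> = 2 * a)))"

definition kepler_billiard_traj ::
  "real \<Rightarrow> pt \<Rightarrow> wall \<Rightarrow> nat \<Rightarrow> (nat \<Rightarrow> real) \<Rightarrow> (nat \<Rightarrow> real \<Rightarrow> pt) \<Rightarrow> (nat \<Rightarrow> real \<Rightarrow> pt) \<Rightarrow> bool"
where
  "kepler_billiard_traj mu F w n t x v \<longleftrightarrow>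
     (\<forall>i\<le>n. t i < t (Suc i) \<and>
        (\<forall>s\<in>{t i..t (Suc i)}. x i s \<noteq> F \<and>
           (x i has_vector_derivative v i s) (at s within {t i..t (Suc i)}) \<and>
           (v i has_vector_derivative kepler_acc mu F (x i s)) (at s within {t i..t (Suc i)}))) \<and>
     (\<forall>i\<in>{1..n}. x (i - 1) (t i) = x i (t i) \<and> x i (t i) \<in> wall_set F w \<and>
        v i (t i) = reflect_tangent (wall_normal F w (x i (t i))) (v (i - 1) (t i)))"

end

theory Submission
  imports Defs
begin

lemma comp_deriv:
  assumes "(X has_vector_derivative V) (at s within S)"
  shows "((\<lambda>s. X s $ i) has_real_derivative V $ i) (at s within S)"
  using bounded_linear.has_derivative[OF bounded_linear_vec_nth assms[unfolded has_vector_derivative_def], of i]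
  unfolding has_field_derivative_def by (simp add: mult.commute[of _ "V$i"])

lemma inner2: "(a::real^2) \<bullet> b = a$1*b$1 + a$2*b$2"
  by (simp add: inner_vec_def sum_2)
lemma norm2: "norm (a::real^2) = sqrt ((a$1)^2 + (a$2)^2)"
  by (simp add: norm_eq_sqrt_inner inner2 power2_eq_square)

lemma real_deriv_unique:
  assumes "a < b" "s \<in> {a..b}" "(f has_real_derivative d1) (at s within {a..b})"
   "(f has_real_derivative d2) (at s within {a..b})"
  shows "d1 = d2"
  using vector_derivative_unique_within_closed_interval[of a b s f d1 d2] assms
  by (simp add: has_real_derivative_iff_has_vector_derivative)

lemma focus_alg:
  fixes q1 q2 u1 u2 g1 g2 b r mu :: real
  assumes r: "r > 0" "r^2 = q1^2 + q2^2" and L: "q1*u2 - q2*u1 \<noteq> 0" and mu: "mu \<noteq> 0" and bnz: "b \<noteq> 0"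
    and e1: "4*b*((q1*u1+q2*u2)/r) - 2*(u1*g1+u2*g2) = 0"
    and e2: "4*b*((u1^2+u2^2 - mu/r)/r - (q1*u1+q2*u2)^2/r^3) + 2*mu*(q1*g1+q2*g2)/r^3 = 0"
    and e0: "4*b*r - 2*(q1*g1+q2*g2) = 4*b^2 - (g1^2+g2^2)"
  defines "E \<equiv> (u1^2+u2^2)/2 - mu/r" and "L \<equiv> q1*u2 - q2*u1"
  shows "E \<noteq> 0 \<and> E*g1 = L*u2 - mu*q1/r \<and> E*g2 = -L*u1 - mu*q2/r"
proof -
  have Lnz: "L \<noteq> 0" using L L_def by simp
  have lag: "(u1^2+u2^2)*r^2 - (q1*u1+q2*u2)^2 = L^2" unfolding L_def r(2) by algebra
  have qg: "q1*g1+q2*g2 = 2*b*(mu*r - L^2)/mu"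
  proof -
    have "4*b*((u1^2+u2^2)*r^2 - mu*r - (q1*u1+q2*u2)^2) + 2*mu*(q1*g1+q2*g2)
      = r^3 * (4*b*((u1^2+u2^2 - mu/r)/r - (q1*u1+q2*u2)^2/r^3) + 2*mu*(q1*g1+q2*g2)/r^3)"
      using r(1) by (simp add: field_simps power3_eq_cube power2_eq_square)
    then have "4*b*((u1^2+u2^2)*r^2 - mu*r - (q1*u1+q2*u2)^2) + 2*mu*(q1*g1+q2*g2) = 0"
      using e2 by simp
    moreover have "(u1^2+u2^2)*r^2 - mu*r - (q1*u1+q2*u2)^2 = L^2 - mu*r" using lag by simp
    ultimately have "4*b*(L^2 - mu*r) + 2*mu*(q1*g1+q2*g2) = 0" by simp
    then show ?thesis using mu by (simp add: field_simps)
  qed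
  have vg: "u1*g1+u2*g2 = 2*b*(q1*u1+q2*u2)/r" using e1 r(1) by (simp add: field_simps)
  have g1: "g1 = 2*b*(q1/r - u2*L/mu)"
  proof -
    have "L*g1 = u2*(q1*g1+q2*g2) - q2*(u1*g1+u2*g2)" unfolding L_def by algebra
    also have "\<dots> = 2*b*((u2*r^2 - q2*(q1*u1+q2*u2))/r - u2*L^2/mu)"
      unfolding qg vg using r(1) mu by (simp add: field_simps power2_eq_square)
    also have "u2*r^2 - q2*(q1*u1+q2*u2) = q1*L" unfolding r(2) L_def by algebra
    finally have X: "L*g1 = 2*b*(q1*L/r - u2*L^2/mu)" .
    have "L*g1 = L*(2*b*(q1/r - u2*L/mu))" unfolding X by (simp add: field_simps power2_eq_square)
    then show ?thesis using Lnz by simp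
  qed
  have g2: "g2 = 2*b*(q2/r + u1*L/mu)"
  proof -
    have "L*g2 = q1*(u1*g1+u2*g2) - u1*(q1*g1+q2*g2)" unfolding L_def by algebra
    also have "\<dots> = 2*b*((q1*(q1*u1+q2*u2) - u1*r^2)/r + u1*L^2/mu)"
      unfolding qg vg using r(1) mu by (simp add: field_simps power2_eq_square)
    also have "q1*(q1*u1+q2*u2) - u1*r^2 = q2*L" unfolding r(2) L_def by algebra
    finally have X: "L*g2 = 2*b*(q2*L/r + u1*L^2/mu)" .
    have "L*g2 = L*(2*b*(q2/r + u1*L/mu))" unfolding X by (simp add: field_simps power2_eq_square)
    then show ?thesis using Lnz by simp
  qed
  have A2: "(L*u2 - mu*q1/r)^2 + (-L*u1 - mu*q2/r)^2 = mu^2 + 2*E*L^2"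
  proof -
    have "(L*u2 - mu*q1/r)^2 + (-L*u1 - mu*q2/r)^2 = L^2*(u1^2+u2^2) - 2*L*mu*(q1*u2 - q2*u1)/r + mu^2*(q1^2+q2^2)/r^2"
      using r(1) by (simp add: field_simps power2_eq_square)
    also have "mu^2*(q1^2+q2^2)/r^2 = mu^2" using r by (simp flip: r(2))
    also have "L^2*(u1^2+u2^2) - 2*L*mu*(q1*u2 - q2*u1)/r + mu^2 = mu^2 + 2*E*L^2"
      using r(1) unfolding E_def L_def[symmetric] by (simp add: field_simps power2_eq_square)
    finally show ?thesis .
  qed
  have gA1: "g1 = -2*b/mu*(L*u2 - mu*q1/r)" using g1 mu by (simp add: field_simps)
  have gA2: "g2 = -2*b/mu*(-L*u1 - mu*q2/r)" using g2 mu by (simp add: field_simps)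
  have "g1^2+g2^2 = (2*b/mu)^2*((L*u2 - mu*q1/r)^2 + (-L*u1 - mu*q2/r)^2)"
    by (simp only: gA1 gA2 power_mult_distrib) (simp add: power2_eq_square algebra_simps)
  then have gsq: "g1^2+g2^2 = 4*b^2/mu^2*(mu^2 + 2*E*L^2)"
    unfolding A2 by (simp add: power_divide)
  have "4*b*r - 2*(q1*g1+q2*g2) = 4*b*L^2/mu" unfolding qg using mu by (simp add: field_simps)
  then have "4*b*L^2/mu = 4*b^2 - 4*b^2/mu^2*(mu^2 + 2*E*L^2)"
    using e0 gsq by simp
  also have "\<dots> = -8*b^2*E*L^2/mu^2" using mu by (simp add: field_simps)
  finally have "4*b*L^2*mu = -8*b^2*E*L^2" using mu by (simp add: field_simps power2_eq_square)
  then have "b*L^2*(mu + 2*b*E) = 0" by (simp add: algebra_simps power2_eq_square)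
  then have mE: "mu = -2*b*E" using bnz Lnz by simp
  have "E \<noteq> 0" using mE mu by auto
  moreover have "E*g1 = L*u2 - mu*q1/r" unfolding gA1 using mu bnz mE by (simp add: field_simps)
  moreover have "E*g2 = -L*u1 - mu*q2/r" unfolding gA2 using mu bnz mE by (simp add: field_simps)
  ultimately show ?thesis by blast
qed

lemma r_deriv:
  fixes q1 q2 u1 u2 :: "real \<Rightarrow> real" and I :: "real set"
  assumes dq1: "(q1 has_real_derivative u1 y) (at y within I)"
    and dq2: "(q2 has_real_derivative u2 y) (at y within I)"
    and nz: "q1 y^2 + q2 y^2 > 0"
  shows "((\<lambda>y. sqrt(q1 y^2 + q2 y^2)) has_real_derivative
           (q1 y*u1 y+q2 y*u2 y)/sqrt(q1 y^2 + q2 y^2)) (at y within I)"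
proof -
  have DD: "((\<lambda>y. q1 y^2 + q2 y^2) has_real_derivative 2*q1 y*u1 y + 2*q2 y*u2 y) (at y within I)"
    by (auto intro!: derivative_eq_intros dq1 dq2)
  have D: "((\<lambda>y. sqrt(q1 y^2 + q2 y^2)) has_real_derivative
     inverse (sqrt (q1 y^2 + q2 y^2)) / 2 * (2*q1 y*u1 y + 2*q2 y*u2 y)) (at y within I)"
    by (rule DERIV_chain2[where f=sqrt and g="\<lambda>y. q1 y^2 + q2 y^2", OF _ DD])
      (use DERIV_real_sqrt[OF nz] in simp)
  have pos: "sqrt(q1 y^2 + q2 y^2) > 0" using nz by simp
  have e: "inverse (sqrt (q1 y^2 + q2 y^2)) / 2 * (2*q1 y*u1 y + 2*q2 y*u2 y) = (q1 y*u1 y+q2 y*u2 y)/sqrt(q1 y^2 + q2 y^2)"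
  proof -
    have "\<And>S A B::real. inverse S / 2 * (2*A + 2*B) = (A+B)/S"
      by (case_tac "S=0") (simp_all add: field_simps)
    then show ?thesis by (metis mult.assoc)
  qed
  show ?thesis using D unfolding e .
qed

lemma arc_derivs:
  fixes q1 q2 u1 u2 r :: "real \<Rightarrow> real" and I :: "real set"
  assumes dq1: "(q1 has_real_derivative u1 y) (at y within I)"
    and dq2: "(q2 has_real_derivative u2 y) (at y within I)"
    and du1: "(u1 has_real_derivative a1) (at y within I)"
    and du2: "(u2 has_real_derivative a2) (at y within I)"
    and dr: "(r has_real_derivative (q1 y*u1 y+q2 y*u2 y)/r y) (at y within I)"
    and nz: "r y > 0"
  shows "((\<lambda>y. 4*b * r y - 2*(q1 y*g1 + q2 y*g2)) has_real_derivative
           4*b * ((q1 y*u1 y+q2 y*u2 y)/r y) - 2*(u1 y*g1+u2 y*g2)) (at y within I)"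
    and "((\<lambda>y. 4*b * ((q1 y*u1 y+q2 y*u2 y)/r y) - 2*(u1 y*g1+u2 y*g2)) has_real_derivative
           4*b * ((u1 y^2+u2 y^2 + q1 y * a1 + q2 y * a2)/r y
             - (q1 y*u1 y+q2 y*u2 y)^2/r y^3) - 2*(a1*g1+a2*g2)) (at y within I)"
  subgoal apply (rule DERIV_cong) apply (rule derivative_eq_intros dq1 dq2 du1 du2 dr refl)+ by (simp add: algebra_simps)
  subgoal apply (rule DERIV_cong) apply (rule derivative_eq_intros dq1 dq2 du1 du2 dr refl | rule nz[THEN less_imp_neq, symmetric])+
    using nz by (simp add: field_simps power2_eq_square power3_eq_cube)
  done

lemma const_deriv_zero:
  assumes ab: "t0 < t1" and y: "y \<in> {t0..t1}"
    and D: "(f has_real_derivative d) (at y within {t0..t1})"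
    and c: "\<forall>z\<in>{t0..t1}. f z = c"
  shows "d = 0"
proof -
  have "((\<lambda>_. c) has_real_derivative 0) (at y within {t0..t1})" by simp
  then have "(f has_real_derivative 0) (at y within {t0..t1})"
    by (rule has_field_derivative_transform_within[where d=1]) (use y c in auto)
  then show ?thesis using real_deriv_unique[OF ab y D] by simp
qed

lemma arc_focus:
  fixes X V :: "real \<Rightarrow> pt" and g :: pt
  assumes ab: "t0 < t1"
   and arc: "\<forall>s\<in>{t0..t1}. X s \<noteq> F \<and> (X has_vector_derivative V s) (at s within {t0..t1}) \<and>
              (V has_vector_derivative kepler_acc mu F (X s)) (at s within {t0..t1})"
   and mu: "mu \<noteq> 0" and bnz: "b \<noteq> 0"
   and H: "\<forall>s\<in>{t0..t1}. 4*b * norm (X s - F) - 2*((X s - F) \<bullet> g) = 4*b^2 - norm g ^ 2"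
   and s: "s \<in> {t0..t1}" and L: "ang_mom F (X s) (V s) \<noteq> 0"
  shows "kepler_energy mu F (X s) (V s) \<noteq> 0 \<and>
    kepler_energy mu F (X s) (V s) * g$1 = ang_mom F (X s) (V s) * V s$2 - mu*(X s - F)$1/norm (X s - F) \<and>
    kepler_energy mu F (X s) (V s) * g$2 = - ang_mom F (X s) (V s) * V s$1 - mu*(X s - F)$2/norm (X s - F)"
proof -
  define I where "I = {t0..t1}"
  define q1 where "q1 y = X y $ 1 - F $ 1" for y
  define q2 where "q2 y = X y $ 2 - F $ 2" for y
  define u1 where "u1 y = V y $ 1" for y
  define u2 where "u2 y = V y $ 2" for y
  define r where "r y = sqrt (q1 y^2 + q2 y^2)" for y
  define a1 where "a1 y = kepler_acc mu F (X y) $ 1" for y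
  define a2 where "a2 y = kepler_acc mu F (X y) $ 2" for y
  have nr: "norm (X y - F) = r y" for y unfolding r_def q1_def q2_def norm2 by simp
  have a1e: "a1 y = -(mu / r y^3) * q1 y" for y unfolding a1_def kepler_acc_def nr[symmetric] q1_def by simp
  have a2e: "a2 y = -(mu / r y^3) * q2 y" for y unfolding a2_def kepler_acc_def nr[symmetric] q2_def by simp
  have rpos: "r y > 0" if "y \<in> I" for y using arc that unfolding I_def nr[symmetric] by auto
  have r2: "r y^2 = q1 y^2 + q2 y^2" for y unfolding r_def by simp
  have derivs: "(q1 has_real_derivative u1 y) (at y within I) \<and> (q2 has_real_derivative u2 y) (at y within I)
     \<and> (u1 has_real_derivative a1 y) (at y within I) \<and> (u2 has_real_derivative a2 y) (at y within I)"
    if "y \<in> I" for y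
  proof -
    have dX: "(X has_vector_derivative V y) (at y within I)" and dV: "(V has_vector_derivative kepler_acc mu F (X y)) (at y within I)"
      using arc that unfolding I_def by auto
    have "((\<lambda>s. X s $ 1 - F $ 1) has_real_derivative V y $ 1 - 0) (at y within I)"
      by (intro derivative_intros comp_deriv[OF dX])
    moreover have "((\<lambda>s. X s $ 2 - F $ 2) has_real_derivative V y $ 2 - 0) (at y within I)"
      by (intro derivative_intros comp_deriv[OF dX])
    ultimately show ?thesis using comp_deriv[OF dV, of 1] comp_deriv[OF dV, of 2]
      unfolding q1_def[abs_def] q2_def[abs_def] u1_def[abs_def] u2_def[abs_def] a1_def a2_def by simp
  qed
  have dr: "(r has_real_derivative (q1 y*u1 y+q2 y*u2 y)/r y) (at y within I)" if "y \<in> I" for y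
    unfolding r_def[abs_def] using derivs[OF that] rpos[OF that] r2[of y]
    by (intro r_deriv) (auto simp: r_def)
  have Hc: "\<forall>y\<in>I. 4*b * r y - 2*(q1 y*g$1 + q2 y*g$2) = 4*b^2 - norm g ^ 2"
    using H unfolding I_def nr[symmetric] q1_def q2_def inner2 by simp
  have h0: "\<forall>y\<in>I. 4*b * ((q1 y*u1 y+q2 y*u2 y)/r y) - 2*(u1 y*g$1+u2 y*g$2) = 0"
  proof
    fix y assume y: "y \<in> I"
    show "4*b * ((q1 y*u1 y+q2 y*u2 y)/r y) - 2*(u1 y*g$1+u2 y*g$2) = 0"
      using const_deriv_zero[OF ab y[unfolded I_def] arc_derivs(1)[of q1 u1 y "{t0..t1}" q2 u2 "a1 y" "a2 y" r b "g$1" "g$2"] Hc[unfolded I_def]]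
        derivs[OF y] dr[OF y] rpos[OF y] unfolding I_def by blast
  qed
  have sI: "s \<in> I" using s I_def by simp
  have h1: "4*b * ((u1 s^2+u2 s^2 + q1 s * a1 s + q2 s * a2 s)/r s
             - (q1 s*u1 s+q2 s*u2 s)^2/r s^3) - 2*(a1 s*g$1+a2 s*g$2) = 0"
    using const_deriv_zero[OF ab s arc_derivs(2)[of q1 u1 s "{t0..t1}" q2 u2 "a1 s" "a2 s" r b "g$1" "g$2"] h0[unfolded I_def]]
        derivs[OF sI] dr[OF sI] rpos[OF sI] unfolding I_def by blast
  have qa: "q1 s * a1 s + q2 s * a2 s = - mu / r s"
  proof -
    have "q1 s * a1 s + q2 s * a2 s = -(mu / r s^3) * (q1 s^2 + q2 s^2)"
      unfolding a1e a2e by (simp add: algebra_simps power2_eq_square)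
    also have "\<dots> = -(mu / r s^3) * r s^2" using r2[of s] by simp
    also have "\<dots> = - mu / r s" using rpos[OF sI] by (simp add: power2_eq_square power3_eq_cube)
    finally show ?thesis .
  qed
  have ag: "a1 s*g$1+a2 s*g$2 = - mu * (q1 s*g$1 + q2 s*g$2) / r s^3"
    unfolding a1e a2e by (simp add: diff_divide_distrib add_divide_distrib algebra_simps)
  have e2: "4*b*((u1 s^2+u2 s^2 - mu/r s)/r s - (q1 s*u1 s+q2 s*u2 s)^2/r s^3) + 2*mu*(q1 s*g$1+q2 s*g$2)/r s^3 = 0"
  proof -
    have X: "u1 s^2+u2 s^2 + q1 s * a1 s + q2 s * a2 s = u1 s^2+u2 s^2 - mu/r s" using qa by linarith
    have "r s \<noteq> 0" using rpos[OF sI] by simp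
    then show ?thesis using h1 unfolding X ag by (simp add: field_simps)
  qed
  have e1: "4*b*((q1 s*u1 s+q2 s*u2 s)/r s) - 2*(u1 s*g$1+u2 s*g$2) = 0" using h0 sI by blast
  have e0: "4*b*r s - 2*(q1 s*g$1+q2 s*g$2) = 4*b^2 - ((g$1)^2+(g$2)^2)"
    using Hc sI unfolding norm2 by simp
  have Ls: "q1 s * u2 s - q2 s * u1 s \<noteq> 0" using L unfolding ang_mom_def q1_def q2_def u1_def u2_def by simp
  note R = focus_alg[OF rpos[OF sI] r2 Ls mu bnz e1 e2 e0]
  have Ee: "kepler_energy mu F (X s) (V s) = (u1 s^2+u2 s^2)/2 - mu/r s"
    unfolding kepler_energy_def nr u1_def u2_def by (simp add: norm2)
  have Le: "ang_mom F (X s) (V s) = q1 s * u2 s - q2 s * u1 s"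
    unfolding ang_mom_def q1_def q2_def u1_def u2_def by simp
  show ?thesis using R unfolding Ee Le nr q1_def q2_def u1_def u2_def by simp
qed

lemma sq_form:
  fixes P F G :: pt
  assumes "(dist P G)^2 = (k - dist P F)^2"
  shows "4*(k/2) * norm (P - F) - 2*((P - F) \<bullet> (G - F)) = 4*(k/2)^2 - norm (G - F)^2"
proof -
  have "(dist P G)^2 = norm ((P - F) - (G - F))^2" by (simp add: dist_norm)
  also have "\<dots> = norm (P - F)^2 - 2*((P - F) \<bullet> (G - F)) + norm (G - F)^2"
    by (simp add: power2_norm_eq_inner inner_diff_left inner_diff_right inner_commute)
  finally show ?thesis using assms by (simp add: dist_norm power2_eq_square algebra_simps)
qed

lemma sign_const:
  fixes phi :: "real \<Rightarrow> real"
  assumes ab: "t0 \<le> t1" and c: "continuous_on {t0..t1} phi" and a: "a > 0"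
    and h: "\<forall>s\<in>{t0..t1}. \<bar>phi s\<bar> = a"
  shows "\<forall>s\<in>{t0..t1}. phi s = phi t0"
proof
  fix s assume s: "s \<in> {t0..t1}"
  have c': "continuous_on {t0..s} phi" by (rule continuous_on_subset[OF c]) (use s in auto)
  have t0: "t0 \<in> {t0..t1}" using ab by simp
  show "phi s = phi t0"
  proof (rule ccontr)
    assume ne: "phi s \<noteq> phi t0"
    have "\<bar>phi s\<bar> = a" "\<bar>phi t0\<bar> = a" using h s t0 by auto
    then have "phi s = - phi t0" using ne by linarith
    then consider "phi t0 \<le> 0" "0 \<le> phi s" | "phi s \<le> 0" "0 \<le> phi t0" by linarith
    then obtain z where z: "z \<in> {t0..s}" "phi z = 0"
    proof cases
      case 1 then show ?thesis using IVT'[of phi t0 0 s] c' s that by auto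
    next
      case 2 then show ?thesis using IVT2'[of phi s 0 t0] c' s that by auto
    qed
    then have "z \<in> {t0..t1}" using s by auto
    then show False using h z a by auto
  qed
qed

lemma focus_H:
  fixes X V :: "real \<Rightarrow> pt"
  assumes ab: "t0 < t1"
   and arc: "\<forall>s\<in>{t0..t1}. X s \<noteq> F \<and> (X has_vector_derivative V s) (at s within {t0..t1}) \<and>
              (V has_vector_derivative kepler_acc mu F (X s)) (at s within {t0..t1})"
   and sf: "second_focus F E (X ` {t0..t1}) G"
  shows "\<exists>b. b \<noteq> 0 \<and> (\<forall>s\<in>{t0..t1}. 4*b * norm (X s - F) - 2*((X s - F) \<bullet> (G - F)) = 4*b^2 - norm (G - F)^2)"
proof -
  from sf consider a where "a > 0" "\<forall>s\<in>{t0..t1}. dist (X s) F + dist (X s) G = 2*a"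
    | a where "a > 0" "\<forall>s\<in>{t0..t1}. \<bar>dist (X s) F - dist (X s) G\<bar> = 2*a"
    unfolding second_focus_def by auto
  then show ?thesis
  proof cases
    case (1 a)
    show ?thesis
    proof (intro exI conjI ballI)
      show "2*a/2 \<noteq> 0" using 1 by simp
      fix s assume s: "s \<in> {t0..t1}"
      have e: "dist (X s) F + dist (X s) G = 2*a" using 1 s by blast
      then have "dist (X s) G = 2*a - dist (X s) F" by linarith
      then have "(dist (X s) G)^2 = (2*a - dist (X s) F)^2" by simp
      from sq_form[OF this] show "4*(2*a/2) * norm (X s - F) - 2*((X s - F) \<bullet> (G - F)) = 4*(2*a/2)^2 - norm (G - F)^2" .
    qed
  next
    case (2 a)
    define phi where "phi s = dist (X s) F - dist (X s) G" for s
    have cX: "continuous_on {t0..t1} X" using arc by (intro continuous_on_vector_derivative) auto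
    have cphi: "continuous_on {t0..t1} phi" unfolding phi_def
      by (intro continuous_intros cX)
    have ph: "\<forall>s\<in>{t0..t1}. \<bar>phi s\<bar> = 2*a" using 2(2) unfolding phi_def by blast
    have "2*a > 0" using 2(1) by simp
    note const = sign_const[OF less_imp_le[OF ab] cphi this ph]
    define k where "k = phi t0"
    have "t0 \<in> {t0..t1}" using ab by simp
    then have "\<bar>k\<bar> = 2*a" using 2 unfolding k_def phi_def by blast
    then have kk: "k \<noteq> 0" using 2 by auto
    show ?thesis
    proof (intro exI conjI ballI)
      show "k/2 \<noteq> 0" using kk by simp
      fix s assume s: "s \<in> {t0..t1}"
      have "phi s = k" using const s unfolding k_def by blast
      then have "dist (X s) G = dist (X s) F - k" unfolding phi_def by linarith
      then have "(dist (X s) G)^2 = (k - dist (X s) F)^2" by (simp add: power2_commute)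
      from sq_form[OF this] show "4*(k/2) * norm (X s - F) - 2*((X s - F) \<bullet> (G - F)) = 4*(k/2)^2 - norm (G - F)^2" .
    qed
  qed
qed

lemma L_const:
  fixes X V :: "real \<Rightarrow> pt"
  assumes arc: "\<forall>s\<in>{t0..t1}. X s \<noteq> F \<and> (X has_vector_derivative V s) (at s within {t0..t1}) \<and>
              (V has_vector_derivative kepler_acc mu F (X s)) (at s within {t0..t1})"
  shows "\<forall>s\<in>{t0..t1}. ang_mom F (X s) (V s) = ang_mom F (X t0) (V t0)"
proof -
  have "\<exists>c. \<forall>s\<in>{t0..t1}. ang_mom F (X s) (V s) = c"
  proof (rule has_field_derivative_zero_constant)
    show "convex {t0..t1}" by simp
    fix y assume y: "y \<in> {t0..t1}"
    have dX: "(X has_vector_derivative V y) (at y within {t0..t1})" and dV: "(V has_vector_derivative kepler_acc mu F (X y)) (at y within {t0..t1})"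
      using arc y by auto
    note d = comp_deriv[OF dX, of 1] comp_deriv[OF dX, of 2] comp_deriv[OF dV, of 1] comp_deriv[OF dV, of 2]
    show "((\<lambda>s. ang_mom F (X s) (V s)) has_real_derivative 0) (at y within {t0..t1})"
      unfolding ang_mom_def vector_minus_component
      apply (rule DERIV_cong)
       apply (rule derivative_eq_intros d refl)+
      by (simp add: kepler_acc_def algebra_simps add_divide_distrib[symmetric] diff_divide_distrib[symmetric])
  qed
  then obtain c where c: "\<forall>s\<in>{t0..t1}. ang_mom F (X s) (V s) = c" by blast
  show ?thesis
  proof
    fix s assume s: "s \<in> {t0..t1}"
    then have "t0 \<in> {t0..t1}" by auto
    with s c show "ang_mom F (X s) (V s) = ang_mom F (X t0) (V t0)" by simp
  qed
qed

lemma refl_key: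
  fixes a b c d e u1 u2 :: real
  assumes "a^2+b^2 = 1" "c^2+d^2 = 1" "e^2 = 1"
  shows "((a - e*c)*u2 - (b - e*d)*u1) * ((a+e*c)^2 + (b+e*d)^2)
       = 2*e*(u1*(a+e*c) + u2*(b+e*d)) * (a*d - b*c)"
  using assms by algebra

lemma refl_alg:
  fixes a b c d e u1 u2 k :: real
  assumes "a^2+b^2 = 1" "c^2+d^2 = 1" "e^2 = 1"
    and k: "k = 2*(u1*(a+e*c) + u2*(b+e*d)) / ((a+e*c)^2 + (b+e*d)^2)"
  shows "(a*(u2 - k*(b+e*d)) - b*(u1 - k*(a+e*c))) * (c*(u2 - k*(b+e*d)) - d*(u1 - k*(a+e*c)))
       = (a*u2 - b*u1) * (c*u2 - d*u1)"
proof (cases "(a+e*c)^2 + (b+e*d)^2 = 0")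
  case True then show ?thesis using k by simp
next
  case False
  define N where "N = (a+e*c)^2 + (b+e*d)^2"
  define K where "K = a*d - b*c"
  have kN: "k*N = 2*(u1*(a+e*c) + u2*(b+e*d))" using False k N_def by simp
  have key: "((a - e*c)*u2 - (b - e*d)*u1) * N = 2*e*(u1*(a+e*c) + u2*(b+e*d)) * K"
    using refl_key[OF assms(1-3)] N_def K_def by simp
  have key2: "(a - e*c)*u2 - (b - e*d)*u1 = k*e*K"
  proof -
    have "(k*e*K)*N = e*K*(k*N)" by (simp add: ac_simps)
    also have "\<dots> = 2*e*(u1*(a+e*c) + u2*(b+e*d)) * K" unfolding kN by (simp add: ac_simps)
    finally have X: "(k*e*K)*N = 2*e*(u1*(a+e*c) + u2*(b+e*d)) * K" .
    have "((a - e*c)*u2 - (b - e*d)*u1) * N = (k*e*K) * N" by (simp only: key X)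
    moreover have "N \<noteq> 0" using False N_def by simp
    ultimately show ?thesis by simp
  qed
  have lhs: "(a*(u2 - k*(b+e*d)) - b*(u1 - k*(a+e*c))) = (a*u2 - b*u1) - k*e*K"
    unfolding K_def by (simp add: algebra_simps)
  have rhs: "(c*(u2 - k*(b+e*d)) - d*(u1 - k*(a+e*c))) = (c*u2 - d*u1) + k*K"
    using assms(3) unfolding K_def by (simp add: algebra_simps power2_eq_square)
  have "((a*u2 - b*u1) - k*e*K) * ((c*u2 - d*u1) + k*K) - (a*u2 - b*u1) * (c*u2 - d*u1)
      = k*K*((a - e*c)*u2 - (b - e*d)*u1 - k*e*K)" by (simp add: algebra_simps)
  also have "\<dots> = 0" using key2 by simp
  finally show ?thesis unfolding lhs rhs by simp
qed

definition cross :: "pt \<Rightarrow> pt \<Rightarrow> real" where "cross a b = a$1*b$2 - a$2*b$1"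

lemma unit2: "norm (sgn (x::pt)) = 1 \<Longrightarrow> (sgn x $ 1)^2 + (sgn x $ 2)^2 = 1"
  by (metis norm2 real_sqrt_eq_1_iff)

lemma refl_comp:
  "reflect_tangent nu u $ j = u$j - (2*(u$1*nu$1 + u$2*nu$2) / ((nu$1)^2 + (nu$2)^2)) * nu$j"
  unfolding reflect_tangent_def by (simp add: inner2 power2_eq_square)

lemma refl_inv:
  fixes x y u nu :: pt and e :: real
  assumes e: "e^2 = 1" and nu: "nu = sgn x + e *\<^sub>R sgn y"
  shows "cross x (reflect_tangent nu u) * cross y (reflect_tangent nu u) = cross x u * cross y u"
proof (cases "x = 0 \<or> y = 0")
  case True then show ?thesis by (auto simp: cross_def)
next
  case False
  then have nx: "x \<noteq> 0" and ny: "y \<noteq> 0" by auto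
  define a where "a = sgn x $ 1"
  define b where "b = sgn x $ 2"
  define c where "c = sgn y $ 1"
  define d where "d = sgn y $ 2"
  have ab: "a^2+b^2 = 1" unfolding a_def b_def using nx by (intro unit2) (simp add: norm_sgn)
  have cd: "c^2+d^2 = 1" unfolding c_def d_def using ny by (intro unit2) (simp add: norm_sgn)
  have n1: "nu$1 = a + e*c" and n2: "nu$2 = b + e*d" unfolding nu a_def b_def c_def d_def by simp_all
  define k where "k = 2*(u$1*(a+e*c) + u$2*(b+e*d)) / ((a+e*c)^2 + (b+e*d)^2)"
  have r1: "reflect_tangent nu u $ 1 = u$1 - k*(a+e*c)" and r2: "reflect_tangent nu u $ 2 = u$2 - k*(b+e*d)"
    unfolding refl_comp n1 n2 k_def by simp_all
  have xs: "x = norm x *\<^sub>R sgn x" and ys: "y = norm y *\<^sub>R sgn y" using nx ny by (simp_all add: sgn_div_norm)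
  have cx: "cross x w = norm x * (a*w$2 - b*w$1)" for w
    unfolding cross_def a_def b_def by (subst (1 2) xs) (simp add: algebra_simps)
  have cy: "cross y w = norm y * (c*w$2 - d*w$1)" for w
    unfolding cross_def c_def d_def by (subst (1 2) ys) (simp add: algebra_simps)
  have "(a*(u$2 - k*(b+e*d)) - b*(u$1 - k*(a+e*c))) * (c*(u$2 - k*(b+e*d)) - d*(u$1 - k*(a+e*c)))
       = (a*u$2 - b*u$1) * (c*u$2 - d*u$1)" by (rule refl_alg[OF ab cd e k_def])
  moreover have P: "cross x w * cross y w = (norm x * norm y) * ((a*w$2 - b*w$1) * (c*w$2 - d*w$1))" for w
    unfolding cx cy by (simp add: ac_simps)
  ultimately show ?thesis unfolding P r1 r2 by simp
qed

lemma norm_reflect: "norm (reflect_tangent nu u) = norm u"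
proof -
  define k where "k = 2 * (u \<bullet> nu) / (nu \<bullet> nu)"
  have eq: "norm (u - k *\<^sub>R nu)^2 = norm u^2 - 2*k*(u \<bullet> nu) + k^2*(nu \<bullet> nu)"
    by (simp only: power2_norm_eq_inner) (simp add: inner_diff_left inner_diff_right inner_commute algebra_simps power2_eq_square)
  have z: "- 2*k*(u \<bullet> nu) + k^2*(nu \<bullet> nu) = 0"
  proof (cases "nu \<bullet> nu = 0")
    case True then show ?thesis by (simp add: k_def)
  next
    case False then show ?thesis by (simp add: k_def power2_eq_square field_simps)
  qed
  have "norm (u - k *\<^sub>R nu)^2 = norm u^2" using eq z by linarith
  then show ?thesis unfolding reflect_tangent_def k_def[symmetric] by simp
qed

lemma dist_formula:
  fixes E g1 g2 f1 f2 q1 q2 u1 u2 r mu L :: real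
  assumes r: "r > 0" "r^2 = q1^2+q2^2" and E: "E = (u1^2+u2^2)/2 - mu/r"
    and g1: "E*g1 = L*u2 - mu*q1/r" and g2: "E*g2 = -L*u1 - mu*q2/r" and L: "L = q1*u2 - q2*u1"
  shows "E^2*((g1-f1)^2+(g2-f2)^2) = mu^2 + 2*E*(L*((q1-f1)*u2 - (q2-f2)*u1) + mu*(q1*f1+q2*f2)/r) + E^2*(f1^2+f2^2)"
proof -
  define A1 where "A1 = L*u2 - mu*q1/r"
  define A2 where "A2 = -L*u1 - mu*q2/r"
  have "E^2*((g1-f1)^2+(g2-f2)^2) = (E*g1 - E*f1)^2 + (E*g2 - E*f2)^2" by (simp add: power2_eq_square algebra_simps)
  also have "\<dots> = (A1^2 + A2^2) - 2*E*(A1*f1 + A2*f2) + E^2*(f1^2+f2^2)"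
    unfolding g1 g2 A1_def A2_def by (simp add: power2_eq_square algebra_simps)
  also have "A1^2 + A2^2 = mu^2 + 2*E*L^2"
  proof -
    have "A1^2 + A2^2 = L^2*(u1^2+u2^2) - 2*L*mu*(q1*u2 - q2*u1)/r + mu^2*(q1^2+q2^2)/r^2"
      unfolding A1_def A2_def using r(1) by (simp add: field_simps power2_eq_square)
    also have "mu^2*(q1^2+q2^2)/r^2 = mu^2" using r by (simp flip: r(2))
    also have "L^2*(u1^2+u2^2) - 2*L*mu*(q1*u2 - q2*u1)/r + mu^2 = mu^2 + 2*E*L^2"
      using r(1) unfolding E L[symmetric] by (simp add: field_simps power2_eq_square)
    finally show ?thesis .
  qed
  also have "A1*f1 + A2*f2 = L*(u2*f1 - u1*f2) - mu*(q1*f1+q2*f2)/r"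
    unfolding A1_def A2_def by (simp add: algebra_simps add_divide_distrib diff_divide_distrib)
  finally show ?thesis unfolding L by (simp add: algebra_simps power2_eq_square)
qed

lemma step_dist:
  fixes P Q um up Gm Gp F :: pt and mu :: real
  assumes PF: "P \<noteq> F"
    and Em: "kepler_energy mu F P um \<noteq> 0"
    and h1: "kepler_energy mu F P um * (Gm - F)$1 = ang_mom F P um * um$2 - mu*(P - F)$1/norm (P - F)"
    and h2: "kepler_energy mu F P um * (Gm - F)$2 = - ang_mom F P um * um$1 - mu*(P - F)$2/norm (P - F)"
    and h1': "kepler_energy mu F P up * (Gp - F)$1 = ang_mom F P up * up$2 - mu*(P - F)$1/norm (P - F)"
    and h2': "kepler_energy mu F P up * (Gp - F)$2 = - ang_mom F P up * up$1 - mu*(P - F)$2/norm (P - F)"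
    and En: "norm up = norm um"
    and inv: "cross (P-F) up * cross (P-Q) up = cross (P-F) um * cross (P-Q) um"
  shows "dist Gp Q = dist Gm Q"
proof -
  define E where "E = kepler_energy mu F P um"
  have Ep: "kepler_energy mu F P up = E" unfolding E_def kepler_energy_def En ..
  have r: "norm (P - F) > 0" "norm (P - F)^2 = ((P - F)$1)^2 + ((P - F)$2)^2" using PF by (simp, simp add: norm2)
  have Eu: "E = ((um$1)^2+(um$2)^2)/2 - mu/norm (P - F)" "E = ((up$1)^2+(up$2)^2)/2 - mu/norm (P - F)"
    using Ep unfolding E_def kepler_energy_def by (simp_all add: norm2)
  note Dm = dist_formula[OF r Eu(1) h1[folded E_def] h2[folded E_def] ang_mom_def, of "(Q - F)$1" "(Q - F)$2"]
  note Dp = dist_formula[OF r Eu(2) h1'[unfolded Ep] h2'[unfolded Ep] ang_mom_def, of "(Q - F)$1" "(Q - F)$2"]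
  have dd: "dist A Q ^2 = ((A - F)$1 - (Q - F)$1)^2 + ((A - F)$2 - (Q - F)$2)^2" for A
    by (simp add: dist_norm norm2)
  have cc: "ang_mom F P u * (((P - F)$1 - (Q - F)$1)*u$2 - ((P - F)$2 - (Q - F)$2)*u$1) = cross (P-F) u * cross (P-Q) u" for u
    unfolding ang_mom_def cross_def by simp
  have "E^2 * dist Gp Q^2 = E^2 * dist Gm Q^2"
    unfolding dd Dm Dp cc inv ..
  then have "dist Gp Q^2 = dist Gm Q^2" using Em E_def by simp
  then show ?thesis by (simp add: power2_eq_iff_nonneg)
qed

lemma step_par:
  fixes P um up Gm Gp F nv :: pt and mu :: real
  assumes Em: "kepler_energy mu F P um \<noteq> 0"
    and h1: "kepler_energy mu F P um * (Gm - F)$1 = ang_mom F P um * um$2 - mu*(P - F)$1/norm (P - F)"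
    and h2: "kepler_energy mu F P um * (Gm - F)$2 = - ang_mom F P um * um$1 - mu*(P - F)$2/norm (P - F)"
    and h1': "kepler_energy mu F P up * (Gp - F)$1 = ang_mom F P up * up$2 - mu*(P - F)$1/norm (P - F)"
    and h2': "kepler_energy mu F P up * (Gp - F)$2 = - ang_mom F P up * up$1 - mu*(P - F)$2/norm (P - F)"
    and En: "norm up = norm um"
    and inv: "cross (P-F) up * cross nv up = cross (P-F) um * cross nv um"
  shows "Gp \<bullet> nv = Gm \<bullet> nv"
proof -
  define E where "E = kepler_energy mu F P um"
  have Ep: "kepler_energy mu F P up = E" unfolding E_def kepler_energy_def En ..
  have f: "E * ((G - F) \<bullet> nv) = cross (P-F) u * cross nv u - mu*((P - F) \<bullet> nv)/norm (P - F)"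
    if "E * (G - F)$1 = ang_mom F P u * u$2 - mu*(P - F)$1/norm (P - F)"
       "E * (G - F)$2 = - ang_mom F P u * u$1 - mu*(P - F)$2/norm (P - F)" for G u
  proof -
    have "E * ((G - F) \<bullet> nv) = (E * (G - F)$1) * nv$1 + (E * (G - F)$2) * nv$2"
      by (simp add: inner2 algebra_simps)
    also have "\<dots> = cross (P-F) u * cross nv u - mu*((P - F) \<bullet> nv)/norm (P - F)"
      unfolding that ang_mom_def cross_def inner2 by (simp add: algebra_simps add_divide_distrib diff_divide_distrib)
    finally show ?thesis .
  qed
  have "E * ((Gp - F) \<bullet> nv) = E * ((Gm - F) \<bullet> nv)"
    using f[OF h1[folded E_def] h2[folded E_def]] f[OF h1'[unfolded Ep] h2'[unfolded Ep]] inv by simp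
  then have "(Gp - F) \<bullet> nv = (Gm - F) \<bullet> nv" using Em E_def by simp
  then show ?thesis by (simp add: inner_diff_left)
qed

theorem mainTheorem1:
  fixes mu :: real and F :: pt and w :: wall and n :: nat
    and t :: "nat \<Rightarrow> real" and x v :: "nat \<Rightarrow> real \<Rightarrow> pt" and G :: "nat \<Rightarrow> pt"
  assumes "mu \<noteq> 0"
    and "wall_valid F w"
    and "kepler_billiard_traj mu F w n t x v"
    and "kepler_energy mu F (x 0 (t 0)) (v 0 (t 0)) \<noteq> 0"
    and "\<forall>i\<le>n. ang_mom F (x i (t i)) (v i (t i)) \<noteq> 0"
    and "\<forall>i\<le>n. second_focus F (kepler_energy mu F (x i (t i)) (v i (t i)))
                 (x i ` {t i..t (Suc i)}) (G i)"
  shows "(case w of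
            Ellipse F' d \<Rightarrow> (\<exists>r. \<forall>i\<le>n. dist (G i) F' = r)
          | HypBranch F' d \<Rightarrow> (\<exists>r. \<forall>i\<le>n. dist (G i) F' = r)
          | Parabola nv h \<Rightarrow> (\<exists>c. \<forall>i\<le>n. G i \<bullet> nv = c))"
proof -
  note tr = assms(3)[unfolded kepler_billiard_traj_def]
  have arcs: "t i < t (Suc i) \<and> (\<forall>s\<in>{t i..t (Suc i)}. x i s \<noteq> F \<and>
           (x i has_vector_derivative v i s) (at s within {t i..t (Suc i)}) \<and>
           (v i has_vector_derivative kepler_acc mu F (x i s)) (at s within {t i..t (Suc i)}))"
    if "i \<le> n" for i using tr[THEN conjunct1, rule_format, OF that] by blast
  have coll: "x i (t (Suc i)) = x (Suc i) (t (Suc i)) \<and> x (Suc i) (t (Suc i)) \<in> wall_set F w \<and>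
     v (Suc i) (t (Suc i)) = reflect_tangent (wall_normal F w (x (Suc i) (t (Suc i)))) (v i (t (Suc i)))"
    if "i < n" for i
  proof -
    have "Suc i \<in> {1..n}" using that by simp
    then show ?thesis using tr[THEN conjunct2, rule_format, of "Suc i"] by simp
  qed
  have Gf: "kepler_energy mu F (x i s) (v i s) \<noteq> 0 \<and>
    kepler_energy mu F (x i s) (v i s) * (G i - F)$1 = ang_mom F (x i s) (v i s) * v i s$2 - mu*(x i s - F)$1/norm (x i s - F) \<and>
    kepler_energy mu F (x i s) (v i s) * (G i - F)$2 = - ang_mom F (x i s) (v i s) * v i s$1 - mu*(x i s - F)$2/norm (x i s - F)"
    if i: "i \<le> n" and s: "s \<in> {t i..t (Suc i)}" and L: "ang_mom F (x i s) (v i s) \<noteq> 0" for i s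
  proof -
    obtain b where b: "b \<noteq> 0" "\<forall>s\<in>{t i..t (Suc i)}. 4*b * norm (x i s - F) - 2*((x i s - F) \<bullet> (G i - F)) = 4*b^2 - norm (G i - F)^2"
      using focus_H[OF conjunct1[OF arcs[OF i]] conjunct2[OF arcs[OF i]] assms(6)[rule_format, OF i]] by blast
    show ?thesis using arc_focus[OF conjunct1[OF arcs[OF i]] conjunct2[OF arcs[OF i]] assms(1) b(1) b(2) s L] .
  qed
  have Lend: "ang_mom F (x i (t (Suc i))) (v i (t (Suc i))) \<noteq> 0" if i: "i \<le> n" for i
  proof -
    have "t (Suc i) \<in> {t i..t (Suc i)}" using arcs[OF i] by simp
    from bspec[OF L_const[OF conjunct2[OF arcs[OF i]]] this] assms(5)[rule_format, OF i]
    show ?thesis by simp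
  qed
  define P where "P i = x (Suc i) (t (Suc i))" for i
  define um where "um i = v i (t (Suc i))" for i
  define up where "up i = v (Suc i) (t (Suc i))" for i
  have step: "(\<forall>Q. cross (P i - F) (up i) * cross (P i - Q) (up i) = cross (P i - F) (um i) * cross (P i - Q) (um i)
                 \<longrightarrow> dist (G (Suc i)) Q = dist (G i) Q) \<and>
              (\<forall>nv. cross (P i - F) (up i) * cross nv (up i) = cross (P i - F) (um i) * cross nv (um i)
                 \<longrightarrow> G (Suc i) \<bullet> nv = G i \<bullet> nv) \<and>
              P i \<in> wall_set F w \<and> P i \<noteq> F \<and> up i = reflect_tangent (wall_normal F w (P i)) (um i)"
    if i: "i < n" for i
  proof -
    have i1: "i \<le> n" and i2: "Suc i \<le> n" using i by auto
    have c: "x i (t (Suc i)) = P i" "P i \<in> wall_set F w" "up i = reflect_tangent (wall_normal F w (P i)) (um i)"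
      using coll[OF i] unfolding P_def up_def um_def by auto
    have s1: "t (Suc i) \<in> {t i..t (Suc i)}" using arcs[OF i1] by simp
    have s2: "t (Suc i) \<in> {t (Suc i)..t (Suc (Suc i))}" using arcs[OF i2] by simp
    have PF: "P i \<noteq> F" using arcs[OF i2] s2 unfolding P_def by blast
    note Gm = Gf[OF i1 s1 Lend[OF i1], unfolded c(1) um_def[symmetric]]
    note Gp = Gf[OF i2 s2 assms(5)[rule_format, OF i2], unfolded P_def[symmetric] up_def[symmetric]]
    have En: "norm (up i) = norm (um i)" using c(3) norm_reflect by simp
    show ?thesis
      using step_dist[OF PF conjunct1[OF Gm] conjunct1[OF conjunct2[OF Gm]] conjunct2[OF conjunct2[OF Gm]]
          conjunct1[OF conjunct2[OF Gp]] conjunct2[OF conjunct2[OF Gp]] En]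
        step_par[OF conjunct1[OF Gm] conjunct1[OF conjunct2[OF Gm]] conjunct2[OF conjunct2[OF Gm]]
          conjunct1[OF conjunct2[OF Gp]] conjunct2[OF conjunct2[OF Gp]] En]
        c PF by blast
  qed
  have distc: "\<exists>r. \<forall>i\<le>n. dist (G i) Q = r"
    if inv: "\<And>i. i < n \<Longrightarrow> cross (P i - F) (up i) * cross (P i - Q) (up i) = cross (P i - F) (um i) * cross (P i - Q) (um i)" for Q
  proof -
    have "\<forall>i\<le>n. dist (G i) Q = dist (G 0) Q"
    proof (intro allI impI)
      fix i assume "i \<le> n" then show "dist (G i) Q = dist (G 0) Q"
      proof (induction i)
        case 0 then show ?case by simp
      next
        case (Suc i)
        then have "i < n" by simp
        then have "dist (G (Suc i)) Q = dist (G i) Q" using step inv by blast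
        then show ?case using Suc by simp
      qed
    qed
    then show ?thesis by blast
  qed
  have parc: "\<exists>c. \<forall>i\<le>n. G i \<bullet> nv = c"
    if inv: "\<And>i. i < n \<Longrightarrow> cross (P i - F) (up i) * cross nv (up i) = cross (P i - F) (um i) * cross nv (um i)" for nv
  proof -
    have "\<forall>i\<le>n. G i \<bullet> nv = G 0 \<bullet> nv"
    proof (intro allI impI)
      fix i assume "i \<le> n" then show "G i \<bullet> nv = G 0 \<bullet> nv"
      proof (induction i)
        case 0 then show ?case by simp
      next
        case (Suc i)
        then have "i < n" by simp
        then have "G (Suc i) \<bullet> nv = G i \<bullet> nv" using step inv by blast
        then show ?case using Suc by simp
      qed
    qed
    then show ?thesis by blast
  qed
  show ?thesis
  proof (cases w)
    case (Ellipse F' d)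
    have "cross (P i - F) (up i) * cross (P i - F') (up i) = cross (P i - F) (um i) * cross (P i - F') (um i)"
      if "i < n" for i
    proof -
      have "up i = reflect_tangent (sgn (P i - F) + 1 *\<^sub>R sgn (P i - F')) (um i)"
        using step[OF that] Ellipse by (simp add: wall_normal_def)
      then show ?thesis using refl_inv[of 1 _ "P i - F" "P i - F'"] by simp
    qed
    then show ?thesis using distc Ellipse by simp
  next
    case (HypBranch F' d)
    have "cross (P i - F) (up i) * cross (P i - F') (up i) = cross (P i - F) (um i) * cross (P i - F') (um i)"
      if "i < n" for i
    proof -
      have "up i = reflect_tangent (sgn (P i - F) + (-1) *\<^sub>R sgn (P i - F')) (um i)"
        using step[OF that] HypBranch by (simp add: wall_normal_def)
      then show ?thesis using refl_inv[of "-1" _ "P i - F" "P i - F'"] by simp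
    qed
    then show ?thesis using distc HypBranch by simp
  next
    case (Parabola nv h)
    have nv1: "norm nv = 1" using assms(2) Parabola by (simp add: wall_valid_def)
    have "cross (P i - F) (up i) * cross nv (up i) = cross (P i - F) (um i) * cross nv (um i)"
      if "i < n" for i
    proof -
      define sg where "sg = sgn (P i \<bullet> nv - h)"
      have "dist (P i) F = \<bar>P i \<bullet> nv - h\<bar>" using step[OF that] Parabola by (simp add: wall_set_def)
      moreover have "dist (P i) F > 0" using step[OF that] by simp
      ultimately have "P i \<bullet> nv - h \<noteq> 0" by auto
      then have sg2: "sg^2 = 1" and sgs: "sgn sg = sg" unfolding sg_def by (auto simp: sgn_if)
      have sn: "sgn (sg *\<^sub>R nv) = sg *\<^sub>R nv" using nv1 sgs by (simp add: sgn_scaleR sgn_div_norm)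
      have "up i = reflect_tangent (sgn (P i - F) - sg *\<^sub>R nv) (um i)"
        using step[OF that] Parabola unfolding sg_def by (simp add: wall_normal_def)
      also have "\<dots> = reflect_tangent (sgn (P i - F) + (-1) *\<^sub>R sgn (sg *\<^sub>R nv)) (um i)"
        unfolding sn by simp
      finally have "up i = reflect_tangent (sgn (P i - F) + (-1) *\<^sub>R sgn (sg *\<^sub>R nv)) (um i)" .
      then have "cross (P i - F) (up i) * cross (sg *\<^sub>R nv) (up i) = cross (P i - F) (um i) * cross (sg *\<^sub>R nv) (um i)"
        using refl_inv[of "-1" _ "P i - F" "sg *\<^sub>R nv"] by simp
      moreover have "cross (sg *\<^sub>R nv) u = sg * cross nv u" for u by (simp add: cross_def algebra_simps)
      ultimately have "sg * (cross (P i - F) (up i) * cross nv (up i)) = sg * (cross (P i - F) (um i) * cross nv (um i))"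
        by (simp add: algebra_simps)
      moreover have "sg \<noteq> 0" using sg2 by auto
      ultimately show ?thesis by simp
    qed
    then show ?thesis using parc Parabola by simp
  qed
qed

end
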